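(* There exist constants $M>0$ and $k_0>0$ such that for all $k$ on the imaginary axis $k\in i\mathbb{R}$ with $|k|>k_0$, $$\Big|\frac{y(1;k)}{y'(1;k)}\Big|<M\qquad\text{and}\qquad \Big|\frac{j_0(k\tilde n_0)}{\partial_r j_0(k\tilde n_0 r)|_{r=1}}\Big|<M.$$
   Context: Let $\epsilon_0,\gamma_0>0$ be constants and $\epsilon_1,\gamma_1:[0,1]\to(0,\infty)$ twice differentiable; $k\in\mathbb{C}$. Put $\tilde n_0=(\epsilon_0+i\gamma_0/k)^{1/2}$ and $j_0(z)=\sin z/z$. Let $y(r;k)$ be the solution of $y''+k^2(\epsilon_1(r)+i\gamma_1(r)/k)y=0$ on $[0,1]$, $y(0)=0$, $y'(0)=1$, where prime denotes $d/dr$. *)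

theory Defs
  imports "HOL-Analysis.Analysis"
begin

definition j0 :: "complex \<Rightarrow> complex" where
  "j0 z = sin z / z"

definition ntilde0 :: "real \<Rightarrow> real \<Rightarrow> complex \<Rightarrow> complex" where
  "ntilde0 eps0 gam0 k = csqrt (complex_of_real eps0 + \<i> * complex_of_real gam0 / k)"

end

theory Submission imports Defs begin

lemma mono_Re:
  fixes F F' :: "real \<Rightarrow> complex"
  assumes d: "\<forall>x\<in>{0..1}. (F has_vector_derivative F' x) (at x within {0..1})"
    and nn: "\<forall>x\<in>{0..1}. Re (F' x) \<ge> 0"
    and ab: "0 \<le> a" "a \<le> b" "b \<le> 1"
  shows "Re (F a) \<le> Re (F b)"
proof -
  have "(F' has_integral (F b - F a)) {a..b}"
    apply (rule fundamental_theorem_of_calculus[OF ab(2)])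
    apply (rule has_vector_derivative_within_subset[where S="{0..1}"])
    using d ab by auto
  from has_integral_linear[OF this bounded_linear_Re]
  have "((\<lambda>x. Re (F' x)) has_integral Re (F b - F a)) {a..b}" by (simp add: o_def)
  from has_integral_nonneg[OF this] nn ab have "0 \<le> Re (F b - F a)" by auto
  thus ?thesis by simp
qed

lemma part1:
  fixes u v :: "real \<Rightarrow> complex" and q :: "real \<Rightarrow> real"
  assumes q: "\<forall>x\<in>{0..1}. q x \<ge> 0"
    and du: "\<forall>x\<in>{0..1}. (u has_vector_derivative v x) (at x within {0..1})"
    and dv: "\<forall>x\<in>{0..1}. (v has_vector_derivative (of_real (q x) * u x)) (at x within {0..1})"
    and i: "u 0 = 0" "v 0 = 1"
  shows "v 1 \<noteq> 0 \<and> cmod (u 1) \<le> cmod (v 1)"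
proof -
  have dF: "\<forall>x\<in>{0..1}. ((\<lambda>x. cnj (u x) * v x) has_vector_derivative
      (cnj (u x) * (of_real (q x) * u x) + cnj (v x) * v x)) (at x within {0..1})"
    using du dv by (auto intro!: derivative_eq_intros)
  have nF: "\<forall>x\<in>{0..1}. Re (cnj (u x) * (of_real (q x) * u x) + cnj (v x) * v x) \<ge> 0"
  proof
    fix x assume x: "x \<in> {0..1::real}"
    have "cnj (u x) * (of_real (q x) * u x) + cnj (v x) * v x
       = of_real (q x * (cmod (u x))^2 + (cmod (v x))^2)"
      using complex_norm_square[of "u x"] complex_norm_square[of "v x"]
      by (simp add: algebra_simps)
    thus "Re (cnj (u x) * (of_real (q x) * u x) + cnj (v x) * v x) \<ge> 0"
      using q x by simp
  qed
  have Fpos: "\<forall>x\<in>{0..1}. Re (cnj (u x) * v x) \<ge> 0"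
    using mono_Re[OF dF nF, of 0] i by auto
  have dG: "\<forall>x\<in>{0..1}. ((\<lambda>x. cnj (v x) * v x) has_vector_derivative
      (cnj (v x) * (of_real (q x) * u x) + cnj (of_real (q x) * u x) * v x)) (at x within {0..1})"
    using dv by (auto intro!: derivative_eq_intros)
  have nG: "\<forall>x\<in>{0..1}. Re (cnj (v x) * (of_real (q x) * u x) + cnj (of_real (q x) * u x) * v x) \<ge> 0"
  proof
    fix x assume x: "x \<in> {0..1::real}"
    have "Re (cnj (v x) * (of_real (q x) * u x) + cnj (of_real (q x) * u x) * v x)
        = 2 * q x * Re (cnj (u x) * v x)"
      by (simp add: algebra_simps)
    thus "Re (cnj (v x) * (of_real (q x) * u x) + cnj (of_real (q x) * u x) * v x) \<ge> 0"
      using q x Fpos by simp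
  qed
  have G: "\<And>x. x \<in> {0..1} \<Longrightarrow> (cmod (v x))^2 \<le> (cmod (v 1))^2"
  proof -
    fix x :: real assume "x \<in> {0..1}"
    hence "Re (cnj (v x) * v x) \<le> Re (cnj (v 1) * v 1)"
      using mono_Re[OF dG nG, of x 1] by auto
    thus "(cmod (v x))^2 \<le> (cmod (v 1))^2"
      by (metis Re_complex_of_real complex_norm_square mult.commute)
  qed
  from G[of 0] i have "1 \<le> (cmod (v 1))^2" by simp
  hence v1: "v 1 \<noteq> 0" by auto
  have Gb: "\<And>x. x \<in> {0..1} \<Longrightarrow> cmod (v x) \<le> cmod (v 1)"
    using G by (simp add: power2_le_iff_abs_le)
  have "(v has_integral (u 1 - u 0)) {0..1}"
    apply (rule fundamental_theorem_of_calculus) using du by auto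
  from has_integral_bound[of "cmod (v 1)" v _ 0 1] this Gb
  have "cmod (u 1 - u 0) \<le> cmod (v 1)" by auto
  with i v1 show ?thesis by simp
qed


lemma j0_deriv:
  fixes c :: complex assumes c: "c \<noteq> 0"
  shows "((\<lambda>r::real. j0 (c * of_real r)) has_vector_derivative ((c * cos c - sin c) / c)) (at 1)"
proof -
  have d1: "((\<lambda>r::real. c * of_real r) has_vector_derivative c) (at 1)"
    by (auto intro!: derivative_eq_intros)
  have d2: "(j0 has_field_derivative ((cos c * c - sin c) / c^2)) (at ((\<lambda>r::real. c * of_real r) 1))"
    unfolding j0_def using c
    by (auto intro!: derivative_eq_intros simp: field_simps power2_eq_square)
  from field_vector_diff_chain_at[OF d1 d2]
  have "c * ((cos c * c - sin c) / c^2) = (c * cos c - sin c) / c"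
    using c by (simp add: field_simps power2_eq_square)
  with field_vector_diff_chain_at[OF d1 d2]
  show ?thesis by (simp add: o_def)
qed

lemma lin_aux: "(x::real) - y \<le> z \<Longrightarrow> 2 * a \<le> x \<Longrightarrow> y < a \<Longrightarrow> y < z" by linarith

lemma j0_bound:
  fixes s :: real assumes s: "\<bar>s\<bar> \<ge> 2"
  shows "c = \<i> * of_real s \<Longrightarrow> c * cos c - sin c \<noteq> 0 \<and> cmod (sin c) \<le> cmod (c * cos c - sin c)"
proof -
  assume c: "c = \<i> * of_real s"
  define E where "E = exp s"
  have E: "E > 0" by (simp add: E_def)
  have sc: "sin c = \<i> * of_real ((E - inverse E) / 2)"
    unfolding c sin_i_times E_def by (simp add: exp_of_real)
  have cc: "cos c = of_real ((E + inverse E) / 2)"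
    unfolding c E_def by (simp flip: cosh_complex add: exp_of_real)
  have eq: "c * cos c - sin c = \<i> * of_real ((s * (E + inverse E) - (E - inverse E)) / 2)"
  proof -
    have "c * cos c - sin c = c * of_real ((E + inverse E) / 2) - \<i> * of_real ((E - inverse E) / 2)"
      by (simp only: sc cc)
    also have "\<dots> = \<i> * of_real ((s * (E + inverse E) - (E - inverse E)) / 2)"
      by (simp add: c algebra_simps diff_divide_distrib add_divide_distrib)
    finally show ?thesis .
  qed
  have ab: "\<bar>E - inverse E\<bar> < E + inverse E" using E by (simp add: abs_less_iff)
  have "\<bar>s * (E + inverse E) - (E - inverse E)\<bar> \<ge> \<bar>s\<bar> * (E + inverse E) - \<bar>E - inverse E\<bar>"
  proof -
    have a: "E + inverse E > 0" using E by (simp add: add_pos_pos)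
    have "\<bar>s * (E + inverse E)\<bar> = \<bar>s\<bar> * (E + inverse E)"
      using a by (simp add: abs_mult)
    thus ?thesis using abs_triangle_ineq2[of "s * (E + inverse E)" "E - inverse E"] by linarith
  qed
  moreover have "\<bar>s\<bar> * (E + inverse E) \<ge> 2 * (E + inverse E)"
    using s E by (intro mult_right_mono) (auto simp: less_imp_le)
  ultimately have key: "\<bar>s * (E + inverse E) - (E - inverse E)\<bar> > \<bar>E - inverse E\<bar>" using ab by (rule lin_aux)
  have n1: "cmod (sin c) = \<bar>(E - inverse E) / 2\<bar>"
    by (simp only: sc norm_mult norm_ii norm_of_real)
  have n2: "cmod (c * cos c - sin c) = \<bar>(s * (E + inverse E) - (E - inverse E)) / 2\<bar>"
    by (simp only: eq norm_mult norm_ii norm_of_real)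
  have "c * cos c - sin c \<noteq> 0"
  proof
    assume "c * cos c - sin c = 0"
    with n2 have "\<bar>(s * (E + inverse E) - (E - inverse E)) / 2\<bar> = 0" by simp
    with key show False by simp
  qed
  thus ?thesis using key n1 n2 by simp
qed


theorem lemma2p1:
  fixes eps0 gam0 :: real
    and eps1 gam1 eps1' gam1' eps1'' gam1'' :: "real \<Rightarrow> real"
    and y yp :: "complex \<Rightarrow> real \<Rightarrow> complex"
  assumes eps0_pos: "eps0 > 0" and gam0_pos: "gam0 > 0"
    and eps1_pos: "\<forall>r\<in>{0..1}. eps1 r > 0"
    and gam1_pos: "\<forall>r\<in>{0..1}. gam1 r > 0"
    and eps1_d1: "\<forall>r\<in>{0..1}. (eps1 has_real_derivative eps1' r) (at r within {0..1})"
    and eps1_d2: "\<forall>r\<in>{0..1}. (eps1' has_real_derivative eps1'' r) (at r within {0..1})"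
    and gam1_d1: "\<forall>r\<in>{0..1}. (gam1 has_real_derivative gam1' r) (at r within {0..1})"
    and gam1_d2: "\<forall>r\<in>{0..1}. (gam1' has_real_derivative gam1'' r) (at r within {0..1})"
    and y_d1: "\<forall>k. k \<noteq> 0 \<longrightarrow> (\<forall>r\<in>{0..1}.
                 (y k has_vector_derivative yp k r) (at r within {0..1}))"
    and y_ode: "\<forall>k. k \<noteq> 0 \<longrightarrow> (\<forall>r\<in>{0..1}.
                 (yp k has_vector_derivative
                    (- (k\<^sup>2 * (complex_of_real (eps1 r) + \<i> * complex_of_real (gam1 r) / k)) * y k r))
                 (at r within {0..1}))"
    and y_init: "\<forall>k. k \<noteq> 0 \<longrightarrow> y k 0 = 0 \<and> yp k 0 = 1"
  shows "\<exists>M k0. M > 0 \<and> k0 > 0 \<and>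
    (\<forall>t::real. \<bar>t\<bar> > k0 \<longrightarrow>
      (let k = \<i> * complex_of_real t;
           n0 = ntilde0 eps0 gam0 k;
           dj = vector_derivative (\<lambda>r::real. j0 (k * n0 * complex_of_real r)) (at 1)
       in yp k 1 \<noteq> 0 \<and> cmod (y k 1 / yp k 1) < M \<and>
          dj \<noteq> 0 \<and> cmod (j0 (k * n0) / dj) < M))"
proof -
  have ce: "continuous_on {0..1} eps1"
    using eps1_d1 by (meson DERIV_continuous continuous_on_eq_continuous_within)
  have cg: "continuous_on {0..1} gam1"
    using gam1_d1 by (meson DERIV_continuous continuous_on_eq_continuous_within)
  have "continuous_on {0..1} (\<lambda>r. gam1 r / eps1 r)"
    using ce cg eps1_pos by (intro continuous_intros) auto
  hence "compact ((\<lambda>r. gam1 r / eps1 r) ` {0..1})"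
    by (intro compact_continuous_image) auto
  then obtain B where B: "\<forall>r\<in>{0..1}. \<bar>gam1 r / eps1 r\<bar> \<le> B"
    using compact_imp_bounded[THEN bounded_real[THEN iffD1]] by fastforce
  define k0 where "k0 = \<bar>B\<bar> + 2 * gam0 / eps0 + 8 / eps0 + 1"
  have g0: "0 \<le> 2 * gam0 / eps0" "0 \<le> 8 / eps0" using eps0_pos gam0_pos by auto
  have k0pos: "k0 > 0" unfolding k0_def using g0 abs_ge_zero[of B] by linarith
  show ?thesis
  proof (rule exI[of _ 2], rule exI[of _ k0], intro conjI allI impI)
    fix t :: real assume t: "\<bar>t\<bar> > k0"
    define k where "k = \<i> * complex_of_real t"
    have tnz: "t \<noteq> 0" using t k0pos by auto
    have knz: "k \<noteq> 0" using tnz by (simp add: k_def)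
    define q where "q r = t^2 * eps1 r + t * gam1 r" for r
    have tB: "\<bar>t\<bar> \<ge> B" using t g0 unfolding k0_def by linarith
    have qnn: "\<forall>r\<in>{0..1}. q r \<ge> 0"
    proof
      fix r :: real assume r: "r \<in> {0..1}"
      have e: "eps1 r > 0" and g: "gam1 r > 0" using r eps1_pos gam1_pos by auto
      show "q r \<ge> 0"
      proof (cases "t > 0")
        case True thus ?thesis unfolding q_def using e g by (simp add: add_nonneg_nonneg)
      next
        case False
        have "\<bar>gam1 r / eps1 r\<bar> \<le> B" using B r by blast
        hence "gam1 r / eps1 r \<le> \<bar>t\<bar>" using tB by linarith
        hence "gam1 r \<le> \<bar>t\<bar> * eps1 r" using e by (simp add: pos_divide_le_eq)
        hence "t * gam1 r \<ge> t * (\<bar>t\<bar> * eps1 r)" using False by (intro mult_left_mono_neg) auto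
        moreover have "t * (\<bar>t\<bar> * eps1 r) = - (t^2 * eps1 r)" using False
          by (simp add: power2_eq_square)
        ultimately show ?thesis unfolding q_def by linarith
      qed
    qed
    have ode: "\<forall>r\<in>{0..1}. (yp k has_vector_derivative (of_real (q r) * y k r)) (at r within {0..1})"
    proof
      fix r :: real assume r: "r \<in> {0..1}"
      have "- (k\<^sup>2 * (complex_of_real (eps1 r) + \<i> * complex_of_real (gam1 r) / k)) = of_real (q r)"
        using tnz by (simp add: k_def q_def field_simps power2_eq_square)
      thus "(yp k has_vector_derivative (of_real (q r) * y k r)) (at r within {0..1})"
        using y_ode knz r by metis
    qed
    from part1[OF qnn _ ode] y_d1 y_init knz
    have P1: "yp k 1 \<noteq> 0 \<and> cmod (y k 1) \<le> cmod (yp k 1)" by auto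
    hence "cmod (y k 1) / cmod (yp k 1) \<le> 1" by (simp add: divide_le_eq_1)
    hence P1': "cmod (y k 1 / yp k 1) < 2" by (simp add: norm_divide)
    define s where "s = t * sqrt (eps0 + gam0 / t)"
    have tpos: "\<bar>t\<bar> > 0" using tnz by simp
    have tg: "2 * gam0 / eps0 \<le> \<bar>t\<bar>" using t g0 unfolding k0_def by linarith
    hence "2 * gam0 \<le> \<bar>t\<bar> * eps0" using eps0_pos by (simp add: pos_divide_le_eq)
    hence "gam0 / \<bar>t\<bar> \<le> eps0 / 2" using tpos by (simp add: divide_le_eq field_simps)
    moreover have "\<bar>gam0 / t\<bar> = gam0 / \<bar>t\<bar>" using gam0_pos by simp
    ultimately have ge: "eps0 + gam0 / t \<ge> eps0 / 2" by linarith
    have nn: "eps0 + gam0 / t \<ge> 0" using ge eps0_pos by linarith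
    have n0: "ntilde0 eps0 gam0 k = of_real (sqrt (eps0 + gam0 / t))"
    proof -
      have "complex_of_real eps0 + \<i> * complex_of_real gam0 / k = of_real (eps0 + gam0 / t)"
        using tnz by (simp add: k_def)
      moreover have "csqrt (of_real a) = of_real (sqrt a)" if "a \<ge> 0" for a :: real
        using that by (subst csqrt_of_real_nonneg) auto
      ultimately show ?thesis unfolding ntilde0_def using nn by metis
    qed
    have t8: "\<bar>t\<bar> \<ge> 8 / eps0" "\<bar>t\<bar> \<ge> 1" using t g0 abs_ge_zero[of B] unfolding k0_def by linarith+
    have "(8 / eps0) * 1 \<le> \<bar>t\<bar> * \<bar>t\<bar>" by (rule mult_mono) (use t8 g0 in auto)
    hence "8 / eps0 \<le> t^2" by (simp add: power2_eq_square)
    hence "t^2 * eps0 \<ge> 8" using eps0_pos by (simp add: divide_le_eq)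
    have "s^2 = t^2 * (eps0 + gam0 / t)" unfolding s_def using nn
      by (simp add: power_mult_distrib)
    also have "\<dots> \<ge> t^2 * (eps0 / 2)" using ge by (intro mult_left_mono) auto
    finally have "s^2 \<ge> 4" using \<open>t^2 * eps0 \<ge> 8\<close> by linarith
    hence s2: "\<bar>s\<bar> \<ge> 2"
      using abs_le_square_iff[of 2 s] by simp
    define c where "c = k * ntilde0 eps0 gam0 k"
    have "c = k * of_real (sqrt (eps0 + gam0 / t))" by (simp add: c_def n0)
    hence c: "c = \<i> * of_real s" by (simp add: k_def s_def)
    have cnz: "c \<noteq> 0" using c s2 by auto
    have dj: "vector_derivative (\<lambda>r::real. j0 (c * complex_of_real r)) (at 1) = (c * cos c - sin c) / c"
      by (rule vector_derivative_at[OF j0_deriv[OF cnz]])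
    from j0_bound[OF s2 c] have jb: "c * cos c - sin c \<noteq> 0" "cmod (sin c) \<le> cmod (c * cos c - sin c)" by auto
    have eqj: "j0 c / ((c * cos c - sin c) / c) = sin c / (c * cos c - sin c)"
      using cnz jb by (simp add: j0_def field_simps)
    moreover have "cmod (sin c) / cmod (c * cos c - sin c) \<le> 1" using jb by (simp add: divide_le_eq_1)
    ultimately have P2: "cmod (j0 c / ((c * cos c - sin c) / c)) < 2"
      by (simp only: eqj norm_divide)
    show "let k = \<i> * complex_of_real t;
           n0 = ntilde0 eps0 gam0 k;
           dj = vector_derivative (\<lambda>r::real. j0 (k * n0 * complex_of_real r)) (at 1)
       in yp k 1 \<noteq> 0 \<and> cmod (y k 1 / yp k 1) < 2 \<and>
          dj \<noteq> 0 \<and> cmod (j0 (k * n0) / dj) < 2"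
      unfolding Let_def k_def[symmetric] c_def[symmetric] dj using P1 P1' P2 jb cnz by simp
  qed (use k0pos in auto)
qed

end
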